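(* Let $(K,D)$ be a differential field and $v$ a differential valuation on $(K,D)$. Then $D:(K,v)\to(K,v)$ is immediate if and only if $(K,D,v)$ admits asymptotic integration.
   Context: $C=\{a\in K: Da=0\}$ is the field of constants. A valuation $v$ of $K$ is a differential valuation (in the sense of Rosenlicht) if $v$ is trivial on $C$, for every $y\in K$ with $vy=0$ there is a unique $c\in C$ with $v(y-c)>0$, and for all $a,b\in K$ with $va\ge0$, $vb>0$, $b\ne0$: $v(bDa/Db)>0$. $(K,D,v)$ admits asymptotic integration if for every $a'\in K\setminus\{0\}$ there is $a\in K$ with $v(a'-Da)>va'$. $K$ is an ultrametric space with $u(a,b)=v(a-b)$; with $B(x,y)=\{z:v(x-z)\ge v(x-y)\}$, a point $z'$ is an attractor for a map $g$ if for every $y$ with $z'\ne gy$ there is $z$ with $v(gz-z')>v(gy-z')$ and $g(B(y,z))\subseteq B(gy,z')$; $g$ is immediate if every point is an attractor. *)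

theory Defs
  imports Main "HOL-Library.Extended"
begin

definition valuation :: "('a::field \<Rightarrow> 'g::linordered_ab_group_add extended) \<Rightarrow> bool" where
  "valuation v \<longleftrightarrow>
     (\<forall>x. v x = Pinf \<longleftrightarrow> x = 0) \<and> (\<forall>x. v x \<noteq> Minf) \<and>
     (\<forall>x y. v (x * y) = v x + v y) \<and>
     (\<forall>x y. min (v x) (v y) \<le> v (x + y))"

definition derivation :: "('a::field \<Rightarrow> 'a) \<Rightarrow> bool" where
  "derivation D \<longleftrightarrow> (\<forall>a b. D (a + b) = D a + D b) \<and> (\<forall>a b. D (a * b) = a * D b + D a * b)"

definition constants :: "('a::field \<Rightarrow> 'a) \<Rightarrow> 'a set" where
  "constants D = {a. D a = 0}"

text \<open>Differential valuation in the sense of Rosenlicht.\<close>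
definition differential_valuation ::
  "('a::field \<Rightarrow> 'a) \<Rightarrow> ('a \<Rightarrow> 'g::linordered_ab_group_add extended) \<Rightarrow> bool" where
  "differential_valuation D v \<longleftrightarrow>
     valuation v \<and>
     (\<forall>c \<in> constants D. c \<noteq> 0 \<longrightarrow> v c = 0) \<and>
     (\<forall>y. v y = 0 \<longrightarrow> (\<exists>!c. c \<in> constants D \<and> v (y - c) > 0)) \<and>
     (\<forall>a b. v a \<ge> 0 \<and> v b > 0 \<and> b \<noteq> 0 \<longrightarrow> v (b * D a / D b) > 0)"

definition asymptotic_integration ::
  "('a::field \<Rightarrow> 'a) \<Rightarrow> ('a \<Rightarrow> 'g::linordered_ab_group_add extended) \<Rightarrow> bool" where
  "asymptotic_integration D v \<longleftrightarrow> (\<forall>a'. a' \<noteq> 0 \<longrightarrow> (\<exists>a. v (a' - D a) > v a'))"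

definition vball :: "('a::field \<Rightarrow> 'g::linordered_ab_group_add extended) \<Rightarrow> 'a \<Rightarrow> 'a \<Rightarrow> 'a set" where
  "vball v x y = {z. v (x - z) \<ge> v (x - y)}"

definition attractor ::
  "('a::field \<Rightarrow> 'g::linordered_ab_group_add extended) \<Rightarrow> ('a \<Rightarrow> 'a) \<Rightarrow> 'a \<Rightarrow> bool" where
  "attractor v g z' \<longleftrightarrow>
     (\<forall>y. z' \<noteq> g y \<longrightarrow>
        (\<exists>z. v (g z - z') > v (g y - z') \<and> g ` vball v y z \<subseteq> vball v (g y) z'))"

definition immediate ::
  "('a::field \<Rightarrow> 'g::linordered_ab_group_add extended) \<Rightarrow> ('a \<Rightarrow> 'a) \<Rightarrow> bool" where
  "immediate v g \<longleftrightarrow> (\<forall>z'. attractor v g z')"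

end

theory Submission
  imports Defs
begin

lemma vfin: assumes "valuation v" "x \<noteq> 0" shows "\<exists>g. v x = Fin g"
proof -
  have "v x \<noteq> Pinf" "v x \<noteq> Minf" using assms unfolding valuation_def by auto
  thus ?thesis by (cases "v x") auto
qed

lemma vmult: "valuation v \<Longrightarrow> v (x*y) = v x + v y"
  unfolding valuation_def by blast

lemma vzero: "valuation v \<Longrightarrow> v 0 = Pinf"
  unfolding valuation_def by blast

lemma vPinf: "valuation v \<Longrightarrow> v x = Pinf \<longleftrightarrow> x = 0"
  unfolding valuation_def by blast

lemma vmin: "valuation v \<Longrightarrow> min (v x) (v y) \<le> v (x + y)"
  unfolding valuation_def by blast

lemma vone: assumes "valuation v" shows "v (1::'a::field) = (0::'g::linordered_ab_group_add extended)"
proof -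
  obtain g where g: "v (1::'a) = Fin g" using vfin[OF assms, of 1] by auto
  have "v (1::'a) = v 1 + v 1" using vmult[OF assms, of 1 1] by simp
  hence "g = g + g" using g by simp
  hence "g = 0" by simp
  thus ?thesis using g by (simp add: zero_extended_def)
qed

lemma vneg: assumes "valuation v" shows "v (- (x::'a::field)) = (v x :: 'g::linordered_ab_group_add extended)"
proof -
  obtain h where h: "v (-1::'a) = Fin h" using vfin[OF assms, of "-1"] by auto
  have "v (1::'a) = v (-1) + v (-1)" using vmult[OF assms, of "-1" "-1"] by simp
  hence "h + h = 0" using h vone[OF assms] by (simp add: zero_extended_def)
  hence "h = 0"
  proof -
    assume hh: "h + h = 0"
    have "\<not> h > 0" using add_pos_pos[of h h] hh by auto
    moreover have "\<not> h < 0" using add_neg_neg[of h h] hh by auto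
    ultimately show "h = 0" by simp
  qed
  have "v (- x) = v (-1) + v x" using vmult[OF assms, of "-1" x] by simp
  thus ?thesis using h \<open>h = 0\<close> by (cases "v x") auto
qed

lemma vsym: "valuation v \<Longrightarrow> v (x - y) = v (y - x)"
  by (metis minus_diff_eq vneg)

lemma vdiv: assumes "valuation v" "y \<noteq> 0" shows "v (x / y) + v y = v x"
  using vmult[OF assms(1), of "x/y" y] assms(2) by simp

lemma vultra: assumes "valuation v" "v a < v b" shows "v (a + b) = v a"
proof (rule ccontr)
  assume ne: "v (a + b) \<noteq> v a"
  have "min (v a) (v b) \<le> v (a+b)" by (rule vmin[OF assms(1)])
  hence gt: "v (a + b) > v a" using ne assms(2) by auto
  have "min (v (a+b)) (v (-b)) \<le> v ((a+b) + (-b))" by (rule vmin[OF assms(1)])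
  hence "min (v (a+b)) (v b) \<le> v a" using vneg[OF assms(1)] by simp
  thus False using gt assms(2) by (simp add: min_def split: if_splits)
qed



lemma Dadd: "derivation D \<Longrightarrow> D (a + b) = D a + D b"
  unfolding derivation_def by blast
lemma Dmult: "derivation D \<Longrightarrow> D (a * b) = a * D b + D a * b"
  unfolding derivation_def by blast
lemma Ddiff: assumes "derivation D" shows "D (a - b) = D a - D b"
proof -
  have "D a = D ((a - b) + b)" by simp
  also have "\<dots> = D (a - b) + D b" by (rule Dadd[OF assms])
  finally show ?thesis by simp
qed
lemma Done: assumes "derivation D" shows "D (1::'a::field) = 0"
proof -
  have "D (1::'a) = D (1 * 1)" by simp
  also have "\<dots> = D 1 + D 1" using Dmult[OF assms, of 1 1] by simp
  finally have "D (1::'a) + D 1 = D 1 + 0" by simp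
  thus ?thesis by (rule add_left_imp_eq)
qed
lemma Dinv: assumes "derivation D" "(a::'a::field) \<noteq> 0" shows "D (1/a) = - D a / a^2"
proof -
  have "0 = D (a * (1/a))" using assms Done[OF assms(1)] by simp
  also have "\<dots> = a * D (1/a) + D a * (1/a)" by (rule Dmult[OF assms(1)])
  finally have "a * D (1/a) = - D a / a" by (simp add: eq_neg_iff_add_eq_0)
  thus ?thesis using assms(2) by (simp add: field_simps power2_eq_square)
qed

lemma core:
  fixes D :: "'a::field \<Rightarrow> 'a" and v :: "'a \<Rightarrow> 'g::linordered_ab_group_add extended"
  assumes dD: "derivation D" and dv: "differential_valuation D v"
    and a0: "a \<noteq> 0" and va0: "v a \<noteq> 0" and Da0: "D a \<noteq> 0" and vt: "v t \<ge> v a"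
  shows "v (D t) \<ge> v (D a)"
proof -
  have val: "valuation v" using dv unfolding differential_valuation_def by blast
  have ax: "\<And>a b. v a \<ge> 0 \<Longrightarrow> v b > 0 \<Longrightarrow> b \<noteq> 0 \<Longrightarrow> v (b * D a / D b) > 0"
    using dv unfolding differential_valuation_def by blast
  obtain g where g: "v a = Fin g" using vfin[OF val a0] by auto
  obtain d where d: "v (D a) = Fin d" using vfin[OF val Da0] by auto
  define u where "u = t / a"
  have tu: "t = u * a" using a0 unfolding u_def by simp
  have "v u + v a = v t" using vdiv[OF val a0] unfolding u_def by simp
  hence vu: "v u \<ge> 0"
  proof (cases "u = 0")
    case True thus ?thesis using vzero[OF val] by simp
  next
    case False
    then obtain h where h: "v u = Fin h" using vfin[OF val] by blast
    assume "v u + v a = v t"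
    thus ?thesis using vt g h val unfolding valuation_def
      by (cases "v t") (auto simp: zero_extended_def)
  qed
  have C: "v (a * D u / D a) > 0"
  proof (cases "v a > 0")
    case True thus ?thesis using ax[OF vu True a0] by simp
  next
    case False
    hence gn: "g < 0" using va0 g by (auto simp: zero_extended_def)
    have "v (1/a) + v a = v 1" using vdiv[OF val a0] by simp
    hence "v (1/a) + Fin g = 0" using vone[OF val] g by simp
    hence "v (1/a) > 0" using gn val unfolding valuation_def
      by (cases "v (1/a)") (auto simp: zero_extended_def eq_neg_iff_add_eq_0[symmetric])
    moreover have "1/a \<noteq> 0" using a0 by simp
    ultimately have "v ((1/a) * D u / D (1/a)) > 0" by (rule ax[OF vu])
    moreover have "(1/a) * D u / D (1/a) = - (a * D u / D a)"
      unfolding Dinv[OF dD a0] using a0 Da0 by (simp add: field_simps power2_eq_square)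
    ultimately show ?thesis using vneg[OF val] by simp
  qed
  have "v (a * D u) = v (a * D u / D a) + v (D a)" using vdiv[OF val Da0] by simp
  hence v1: "v (a * D u) > v (D a)" using C d val unfolding valuation_def
    by (cases "v (a * D u / D a)") (auto simp: zero_extended_def)
  have "v (u * D a) = v u + v (D a)" by (rule vmult[OF val])
  hence v2: "v (u * D a) \<ge> v (D a)" using vu d
    by (cases "v u") (auto simp: zero_extended_def)
  have "D t = u * D a + a * D u" using Dmult[OF dD, of u a] tu by (simp add: mult.commute)
  moreover have "min (v (u * D a)) (v (a * D u)) \<le> v (u * D a + a * D u)" by (rule vmin[OF val])
  ultimately show ?thesis using v1 v2 by (simp add: min_def split: if_splits)
qed

theorem proposition54:
  fixes D :: "'a::field \<Rightarrow> 'a" and v :: "'a \<Rightarrow> 'g::linordered_ab_group_add extended"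
  assumes "derivation D"
    and "differential_valuation D v"
  shows "immediate v D \<longleftrightarrow> asymptotic_integration D v"
proof -
  note dv = assms(2)[unfolded differential_valuation_def]
  have val: "valuation v" using dv by (rule conjunct1)
  have cst: "\<And>y. v y = 0 \<Longrightarrow> \<exists>c. c \<in> constants D \<and> v (y - c) > 0"
  proof -
    fix y :: 'a assume "v y = 0"
    hence "\<exists>!c. c \<in> constants D \<and> v (y - c) > 0"
      by (rule dv[THEN conjunct2, THEN conjunct2, THEN conjunct1, rule_format])
    thus "\<exists>c. c \<in> constants D \<and> v (y - c) > 0" by (rule ex1_implies_ex)
  qed
  have D0: "D 0 = 0" using Ddiff[OF assms(1), of 0 0] by simp
  show ?thesis
  proof
    assume im: "immediate v D"
    show "asymptotic_integration D v"
      unfolding asymptotic_integration_def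
    proof (intro allI impI)
      fix a' :: 'a assume "a' \<noteq> 0"
      hence "a' \<noteq> D 0" using D0 by simp
      have "attractor v D a'" using im unfolding immediate_def by (rule spec)
      hence "a' \<noteq> D 0 \<longrightarrow> (\<exists>z. v (D z - a') > v (D 0 - a') \<and> D ` vball v 0 z \<subseteq> vball v (D 0) a')"
        unfolding attractor_def by (rule spec)
      hence "\<exists>z. v (D z - a') > v (D 0 - a') \<and> D ` vball v 0 z \<subseteq> vball v (D 0) a'"
        using \<open>a' \<noteq> D 0\<close> by (rule mp)
      then obtain z where "v (D z - a') > v (D 0 - a')" by (elim exE conjE)
      moreover have "v (D z - a') = v (a' - D z)" by (rule vsym[OF val])
      moreover have "v (D 0 - a') = v a'" using D0 vneg[OF val, of a'] by simp
      ultimately have "v (a' - D z) > v a'" by simp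
      thus "\<exists>a. v (a' - D a) > v a'" by blast
    qed
  next
    assume ai: "asymptotic_integration D v"
    show "immediate v D" unfolding immediate_def attractor_def
    proof (intro allI impI)
      fix z' y assume ne: "z' \<noteq> D y"
      define a' where "a' = z' - D y"
      have a'0: "a' \<noteq> 0" using ne unfolding a'_def by simp
      hence "\<exists>a. v (a' - D a) > v a'" using ai unfolding asymptotic_integration_def by (elim allE impE)
      then obtain a where a: "v (a' - D a) > v a'" by (elim exE)
      obtain g where g: "v a' = Fin g" using vfin[OF val a'0] by blast
      have "v (D a + (a' - D a)) = v (D a)"
      proof (rule ccontr)
        assume "v (D a + (a' - D a)) \<noteq> v (D a)"
        have "min (v (D a)) (v (a' - D a)) \<le> v (D a + (a' - D a))" by (rule vmin[OF val])
        hence "v a' \<ge> min (v (D a)) (v (a' - D a))" by simp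
        hence "v (D a) \<le> v a'" using a by (simp add: min_def split: if_splits)
        hence "v (D a) < v (a' - D a)" using a by simp
        hence "v (D a + (a' - D a)) = v (D a)" by (rule vultra[OF val])
        thus False using \<open>v (D a + (a' - D a)) \<noteq> v (D a)\<close> by simp
      qed
      hence vDa: "v (D a) = v a'" by simp
      hence Da0: "D a \<noteq> 0" using g vzero[OF val] by auto
      obtain b where b: "D b = D a" "b \<noteq> 0" "v b \<noteq> 0"
      proof (cases "v a = 0")
        case True
        then obtain c where c: "c \<in> constants D" "v (a - c) > 0" using cst by blast
        have "D (a - c) = D a" using c(1) Ddiff[OF assms(1)] unfolding constants_def by simp
        moreover hence "a - c \<noteq> 0" using Da0 D0 by auto
        moreover have "v (a - c) \<noteq> 0" using c(2) by simp
        ultimately show ?thesis using that by blast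
      next
        case False
        moreover have "a \<noteq> 0" using Da0 D0 by auto
        ultimately show ?thesis using that by blast
      qed
      define z where "z = y + b"
      have "v (D z - z') = v (z' - D z)" by (rule vsym[OF val])
      also have "z' - D z = a' - D a"
        using Dadd[OF assms(1), of y b] b(1) unfolding z_def a'_def by (simp add: algebra_simps)
      finally have "v (D z - z') = v (a' - D a)" .
      moreover have "v (D y - z') = v a'" unfolding a'_def by (rule vsym[OF val])
      ultimately have 1: "v (D z - z') > v (D y - z')" using a by simp
      have 2: "D ` vball v y z \<subseteq> vball v (D y) z'"
      proof
        fix x assume "x \<in> D ` vball v y z"
        then obtain w where w: "x = D w" "v (y - w) \<ge> v (y - z)" unfolding vball_def by blast
        have "v (y - z) = v b" using vneg[OF val, of b] unfolding z_def by simp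
        hence "v (D (y - w)) \<ge> v (D b)" using core[OF assms b(2) b(3)] b(1) Da0 w(2) by simp
        hence "v (D y - D w) \<ge> v a'" using Ddiff[OF assms(1)] b(1) vDa by simp
        moreover have "v (D y - z') = v a'" unfolding a'_def by (rule vsym[OF val])
        ultimately show "x \<in> vball v (D y) z'" unfolding vball_def using w(1) by simp
      qed
      show "\<exists>z. v (D z - z') > v (D y - z') \<and> D ` vball v y z \<subseteq> vball v (D y) z'"
        using 1 2 by blast
    qed
  qed
qed

end
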